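(* Let $\mathcal{F}\subseteq\mathcal{P}(\omega)$ be a free filter. Assume that $h\colon Q\to Q$ is a homeomorphism of $Q=[-1,1]^\omega$ such that for every $x\in Q$, $x-h(x)\in C_\mathcal{F}$. Then $h[K_\mathcal{F}]=K_\mathcal{F}$.
   Context: A filter on $\omega$ is free if it contains all cofinite sets. $Q=[-1,1]^\omega$ is the Hilbert cube with the product topology and $Q^\circ=(-1,1)^\omega$ its pseudointerior. $K_\mathcal{F}=\{f\in Q:\forall m\in\omega\ \{n\in\omega:|f(n)|<2^{-m}\}\in\mathcal{F}\}$ and $C_\mathcal{F}=K_\mathcal{F}\cap Q^\circ$. The difference $x-h(x)$ is taken coordinatewise. *)

theory Defs
  imports "HOL-Analysis.Analysis"
begin

definition is_filter_on_nat :: "nat set set \<Rightarrow> bool" where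
  "is_filter_on_nat F \<longleftrightarrow> UNIV \<in> F \<and> {} \<notin> F \<and>
     (\<forall>A\<in>F. \<forall>B\<in>F. A \<inter> B \<in> F) \<and>
     (\<forall>A\<in>F. \<forall>B. A \<subseteq> B \<longrightarrow> B \<in> F)"

definition free_filter :: "nat set set \<Rightarrow> bool" where
  "free_filter F \<longleftrightarrow> is_filter_on_nat F \<and> (\<forall>A. finite (UNIV - A) \<longrightarrow> A \<in> F)"

definition hilbert_cube :: "(nat \<Rightarrow> real) set" where
  "hilbert_cube = {f. \<forall>n. \<bar>f n\<bar> \<le> 1}"

definition pseudointerior :: "(nat \<Rightarrow> real) set" where
  "pseudointerior = {f. \<forall>n. \<bar>f n\<bar> < 1}"

definition Q_top :: "(nat \<Rightarrow> real) topology" where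
  "Q_top = subtopology (product_topology (\<lambda>_. euclideanreal) UNIV) hilbert_cube"

definition K_F :: "nat set set \<Rightarrow> (nat \<Rightarrow> real) set" where
  "K_F F = {f \<in> hilbert_cube. \<forall>m::nat. {n. \<bar>f n\<bar> < (1/2) ^ m} \<in> F}"

definition C_F :: "nat set set \<Rightarrow> (nat \<Rightarrow> real) set" where
  "C_F F = K_F F \<inter> pseudointerior"

end

theory Submission
  imports Defs
begin

lemma small_diff:
  assumes "is_filter_on_nat F"
    and a: "\<forall>m::nat. {n. \<bar>a n\<bar> < (1/2) ^ m} \<in> F"
    and b: "\<forall>m::nat. {n. \<bar>b n\<bar> < (1/2) ^ m} \<in> F"
  shows "{n. \<bar>a n - b n\<bar> < ((1::real)/2) ^ m} \<in> F"
proof -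
  have I: "{n. \<bar>a n\<bar> < (1/2) ^ Suc m} \<inter> {n. \<bar>b n\<bar> < (1/2) ^ Suc m} \<in> F"
    using assms unfolding is_filter_on_nat_def by blast
  have "{n. \<bar>a n\<bar> < (1/2) ^ Suc m} \<inter> {n. \<bar>b n\<bar> < (1/2) ^ Suc m}
        \<subseteq> {n. \<bar>a n - b n\<bar> < ((1::real)/2) ^ m}"
    by auto
  then show ?thesis using I assms(1) unfolding is_filter_on_nat_def by blast
qed

lemma topspace_Q: "topspace Q_top = hilbert_cube"
  unfolding Q_top_def by simp

theorem mainTheorem10:
  fixes F :: "nat set set" and h :: "(nat \<Rightarrow> real) \<Rightarrow> (nat \<Rightarrow> real)"
  assumes "free_filter F"
    and "homeomorphic_map Q_top Q_top h"
    and "\<forall>x\<in>hilbert_cube. (\<lambda>n. x n - h x n) \<in> C_F F"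
  shows "h ` K_F F = K_F F"
proof -
  have fil: "is_filter_on_nat F" using assms(1) free_filter_def by blast
  have surj: "h ` hilbert_cube = hilbert_cube"
    using homeomorphic_imp_surjective_map[OF assms(2)] topspace_Q by simp
  have d: "\<forall>m::nat. {n. \<bar>x n - h x n\<bar> < (1/2) ^ m} \<in> F" if "x \<in> hilbert_cube" for x
    using assms(3) that unfolding C_F_def K_F_def by auto
  show ?thesis
  proof
    show "h ` K_F F \<subseteq> K_F F"
    proof
      fix y assume "y \<in> h ` K_F F"
      then obtain x where x: "x \<in> K_F F" "y = h x" by blast
      have xq: "x \<in> hilbert_cube" using x(1) K_F_def by blast
      have "y \<in> hilbert_cube" using x(2) xq surj by blast
      moreover have "\<forall>m::nat. {n. \<bar>y n\<bar> < (1/2) ^ m} \<in> F"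
      proof
        fix m :: nat
        have "{n. \<bar>x n - (x n - h x n)\<bar> < ((1::real)/2) ^ m} \<in> F"
          by (rule small_diff[OF fil]) (use x(1) d[OF xq] K_F_def in auto)
        then show "{n. \<bar>y n\<bar> < (1/2) ^ m} \<in> F" using x(2) by simp
      qed
      ultimately show "y \<in> K_F F" unfolding K_F_def by blast
    qed
  next
    show "K_F F \<subseteq> h ` K_F F"
    proof
      fix y assume y: "y \<in> K_F F"
      have yq: "y \<in> hilbert_cube" using y K_F_def by blast
      then obtain x where x: "x \<in> hilbert_cube" "y = h x" using surj by blast
      have "\<forall>m::nat. {n. \<bar>x n\<bar> < (1/2) ^ m} \<in> F"
      proof
        fix m :: nat
        have "{n. \<bar>(x n - h x n) - (- h x n)\<bar> < ((1::real)/2) ^ m} \<in> F"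
          by (rule small_diff[OF fil]) (use y x d[OF x(1)] K_F_def in auto)
        then show "{n. \<bar>x n\<bar> < (1/2) ^ m} \<in> F" by simp
      qed
      then have "x \<in> K_F F" using x(1) K_F_def by blast
      then show "y \<in> h ` K_F F" using x(2) by blast
    qed
  qed
qed

end
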